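(* Let $\alpha\in\mathbb{R}$, $\beta\ge0$, $0<\mu\le1$, and define $g(\lambda)=\frac{(\lambda+\beta)^\mu}{(\lambda+\beta)^\mu+\alpha}$ for $\lambda\in\mathbb{C}$ with $\operatorname{Re}(\lambda)>0$. Then: (a) if $\alpha\ge 0$, then $|g(\lambda)|\le 1$ for all $\operatorname{Re}(\lambda)>0$; (b) if $\alpha<0$ and $\alpha+\beta^\mu\ge|\alpha|$, then $|g(\lambda)|\le\frac{\beta^\mu}{\alpha+\beta^\mu}\le\frac{\beta^\mu}{|\alpha|}$ for all $\operatorname{Re}(\lambda)>0$.
   Context: Complex powers $z^\mu$ are taken with the principal branch of the argument. *)

theory Defs
  imports "HOL-Analysis.Analysis"
begin

text \<open>g(z) = (z+beta)^mu / ((z+beta)^mu + alpha), complex powers via the principal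
  branch (Isabelle's complex powr uses the principal logarithm Ln).\<close>
definition gfun :: "real \<Rightarrow> real \<Rightarrow> real \<Rightarrow> complex \<Rightarrow> complex" where
  "gfun \<alpha> \<beta> \<mu> z =
     (z + of_real \<beta>) powr (of_real \<mu>) / ((z + of_real \<beta>) powr (of_real \<mu>) + of_real \<alpha>)"

end

theory Submission
  imports Defs
begin

lemma Re_powr_nonneg:
  fixes w :: complex and \<mu> :: real
  assumes "Re w > 0" "0 < \<mu>" "\<mu> \<le> 1"
  shows "Re (w powr of_real \<mu>) \<ge> 0"
proof -
  have w0: "w \<noteq> 0" using assms by auto
  have a: "\<bar>Im (Ln w)\<bar> < pi/2" using Re_Ln_pos_lt_imp assms by blast
  have "\<bar>\<mu> * Im (Ln w)\<bar> \<le> \<bar>Im (Ln w)\<bar>"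
    using assms by (simp add: abs_mult mult_left_le_one_le)
  hence b: "\<bar>\<mu> * Im (Ln w)\<bar> \<le> pi/2" using a by linarith
  have "cos (\<mu> * Im (Ln w)) \<ge> 0" using b by (intro cos_ge_zero) auto
  moreover have "Re (w powr of_real \<mu>) = exp (Re (of_real \<mu> * Ln w)) * cos (\<mu> * Im (Ln w))"
    using w0 by (simp add: powr_def Re_exp)
  ultimately show ?thesis by simp
qed

lemma key:
  fixes u :: complex and \<alpha> :: real
  shows "cmod (u + of_real \<alpha>) ^ 2 = cmod u ^ 2 + 2 * \<alpha> * Re u + \<alpha>^2"
  unfolding cmod_power2 by (simp add: power2_eq_square algebra_simps)

theorem lemma3p2:
  fixes \<alpha> \<beta> \<mu> :: real
  assumes "\<beta> \<ge> 0" and "0 < \<mu>" and "\<mu> \<le> 1"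
  shows "(\<alpha> \<ge> 0 \<longrightarrow> (\<forall>z. Re z > 0 \<longrightarrow> cmod (gfun \<alpha> \<beta> \<mu> z) \<le> 1))
       \<and> ((\<alpha> < 0 \<and> \<alpha> + \<beta> powr \<mu> \<ge> \<bar>\<alpha>\<bar>) \<longrightarrow>
           (\<forall>z. Re z > 0 \<longrightarrow>
              cmod (gfun \<alpha> \<beta> \<mu> z) \<le> \<beta> powr \<mu> / (\<alpha> + \<beta> powr \<mu>)
            \<and> \<beta> powr \<mu> / (\<alpha> + \<beta> powr \<mu>) \<le> \<beta> powr \<mu> / \<bar>\<alpha>\<bar>))"
proof (intro conjI impI allI)
  fix z :: complex assume a: "\<alpha> \<ge> 0" and z: "Re z > 0"
  define w where "w = z + of_real \<beta>"
  define u where "u = w powr of_real \<mu>"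
  have rw: "Re w > 0" using z assms by (simp add: w_def)
  have ru: "Re u \<ge> 0" unfolding u_def using Re_powr_nonneg[OF rw assms(2,3)] .
  have "cmod u ^ 2 \<le> cmod (u + of_real \<alpha>) ^ 2" using key[of u \<alpha>] a ru by simp
  hence le: "cmod u \<le> cmod (u + of_real \<alpha>)" by (simp add: power2_le_iff_abs_le)
  have "cmod (u / (u + of_real \<alpha>)) \<le> 1"
  proof (cases "u + of_real \<alpha> = 0")
    case True thus ?thesis by simp
  next
    case False thus ?thesis using le by (simp add: norm_divide divide_le_eq_1)
  qed
  thus "cmod (gfun \<alpha> \<beta> \<mu> z) \<le> 1" by (simp add: gfun_def u_def w_def)
next
  fix z :: complex assume a: "\<alpha> < 0 \<and> \<alpha> + \<beta> powr \<mu> \<ge> \<bar>\<alpha>\<bar>" and z: "Re z > 0"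
  define s where "s = \<beta> powr \<mu>"
  define w where "w = z + of_real \<beta>"
  define u where "u = w powr of_real \<mu>"
  have al: "\<alpha> < 0" and sa: "\<alpha> + s \<ge> -\<alpha>" using a by (auto simp: s_def)
  have rw: "Re w > 0" using z assms by (simp add: w_def)
  have ru: "Re u \<le> cmod u" by (rule complex_Re_le_cmod)
  have nu: "cmod u = cmod w powr \<mu>" unfolding u_def by (simp add: norm_powr_real_powr')
  have "\<beta> \<le> cmod w" using rw complex_Re_le_cmod[of w] z by (simp add: w_def)
  hence us: "s \<le> cmod u" unfolding nu s_def using assms by (intro powr_mono2) auto
  have pos: "cmod u + \<alpha> > 0" using us sa al by linarith
  have "(cmod u + \<alpha>)^2 \<le> cmod (u + of_real \<alpha>) ^ 2"
    using key[of u \<alpha>] al ru by (simp add: power2_eq_square algebra_simps mult_left_mono_neg)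
  hence le: "cmod u + \<alpha> \<le> cmod (u + of_real \<alpha>)" using pos
    by (simp add: power2_le_iff_abs_le)
  have d: "cmod (u + of_real \<alpha>) > 0" using le pos by linarith
  have "cmod u / cmod (u + of_real \<alpha>) \<le> cmod u / (cmod u + \<alpha>)"
    using le pos d by (intro divide_left_mono) (auto intro: mult_pos_pos)
  also have "\<dots> \<le> s / (s + \<alpha>)"
  proof -
    have "s + \<alpha> > 0" using sa al by linarith
    hence "cmod u / (cmod u + \<alpha>) \<le> s / (s + \<alpha>) \<longleftrightarrow> cmod u * (s + \<alpha>) \<le> s * (cmod u + \<alpha>)"
      using pos by (simp add: divide_le_eq le_divide_eq field_simps)
    moreover have "cmod u * (s + \<alpha>) \<le> s * (cmod u + \<alpha>)"
      using us al by (simp add: algebra_simps mult_left_mono_neg)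
    ultimately show ?thesis by simp
  qed
  finally have "cmod (u / (u + of_real \<alpha>)) \<le> s / (\<alpha> + s)" by (simp add: norm_divide add.commute)
  thus "cmod (gfun \<alpha> \<beta> \<mu> z) \<le> \<beta> powr \<mu> / (\<alpha> + \<beta> powr \<mu>)"
    by (simp add: gfun_def u_def w_def s_def)
next
  assume a: "\<alpha> < 0 \<and> \<alpha> + \<beta> powr \<mu> \<ge> \<bar>\<alpha>\<bar>"
  hence "\<bar>\<alpha>\<bar> > 0" by auto
  thus "\<beta> powr \<mu> / (\<alpha> + \<beta> powr \<mu>) \<le> \<beta> powr \<mu> / \<bar>\<alpha>\<bar>"
    using a by (intro divide_left_mono) (auto intro!: mult_pos_neg)
qed

end
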